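(* Assume there exist $\gamma\in\mathcal{KL}$ and $\psi:\mathbb R^d\to\mathbb R_+$ with $\overline\psi:=\sup_{x\in X^{\rm in}}\psi(x)\in(0,+\infty)$ such that $\varphi(T^k(x))\le\gamma(\psi(x),k)$ for all $x\in X^{\rm in}$ and all $k\in\mathbb N$. Then: (1) $\limsup_{n\to\infty}\nu_n\le 0$, and if moreover there exist $k\in\mathbb N$ and $x\in X^{\rm in}$ with $\varphi(T^k(x))>0$, then $G^{>}_\nu\neq\emptyset$; (2) there exists $h\in\mathcal K_\infty$ (extended to a function on $\mathbb R$) such that $\nu_k\le h(e^{-k})$ for all $k\in\mathbb N$, i.e. $(h,e^{-1})\in\Gamma(\nu)$, and if moreover there exist $k\in\mathbb N$, $x\in X^{\rm in}$ with $\varphi(T^k(x))>0$, then $\mathcal S(\nu,h)=\{k:\nu_k>h(0)\}\neq\emptyset$.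
   Context: Standing data: a nonempty set $X^{\rm in}\subseteq\mathbb R^d$, a map $T:\mathbb R^d\to\mathbb R^d$ ($T^k$ its $k$-fold composition, $T^0=\mathrm{Id}$), and $\varphi:\mathbb R^d\to\mathbb R$ with $\varphi(0)=0$; $\nu_k=\sup_{x\in X^{\rm in}}\varphi(T^k(x))$, assumed finite for every $k$. $G^{>}_\nu=\{k:\nu_k>\limsup_n\nu_n\}$. $\mathcal K$: continuous strictly increasing $\alpha:\mathbb R_+\to\mathbb R_+$ with $\alpha(0)=0$; $\mathcal K_\infty$: those in $\mathcal K$ with $\alpha(x)\to+\infty$. $\mathcal L$: continuous strictly decreasing $\sigma:\mathbb R_+\to\mathbb R_+$ with $\sigma(x)\to0$ as $x\to\infty$. $\mathcal{KL}$: $\gamma:\mathbb R_+\times\mathbb R_+\to\mathbb R_+$ with $\gamma(\cdot,t)\in\mathcal K$ for all $t$ and $\gamma(s,\cdot)\in\mathcal L$ for all $s$. $\Gamma(\nu)=\{(h,\beta):h:\mathbb R\to\mathbb R$ strictly increasing and continuous on $[0,1]$, $\beta\in(0,1)$, $\nu_k\le h(\beta^k)\ \forall k\}$. *)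

theory Defs
  imports "HOL-Analysis.Analysis" "HOL-Library.Liminf_Limsup"
begin

definition nu :: "'a set \<Rightarrow> ('a \<Rightarrow> 'a) \<Rightarrow> ('a \<Rightarrow> real) \<Rightarrow> nat \<Rightarrow> real" where
  "nu Xin T phi k = (SUP x\<in>Xin. phi ((T ^^ k) x))"

definition G_gt :: "(nat \<Rightarrow> real) \<Rightarrow> nat set" where
  "G_gt v = {k. ereal (v k) > limsup (\<lambda>n. ereal (v n))}"

definition class_K :: "(real \<Rightarrow> real) \<Rightarrow> bool" where
  "class_K a \<longleftrightarrow> continuous_on {0..} a \<and> strict_mono_on {0..} a \<and> a 0 = 0
     \<and> (\<forall>x\<ge>0. a x \<ge> 0)"

definition class_Kinf :: "(real \<Rightarrow> real) \<Rightarrow> bool" where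
  "class_Kinf a \<longleftrightarrow> class_K a \<and> filterlim a at_top at_top"

definition class_L :: "(real \<Rightarrow> real) \<Rightarrow> bool" where
  "class_L s \<longleftrightarrow> continuous_on {0..} s
     \<and> (\<forall>x y. 0 \<le> x \<longrightarrow> x < y \<longrightarrow> s y < s x)
     \<and> (\<forall>x\<ge>0. s x \<ge> 0) \<and> (s \<longlongrightarrow> 0) at_top"

text \<open>KL: gamma(.,t) in K for all t >= 0, gamma(s,.) in L for all s > 0
  (s = 0 is excluded since gamma(0,.) = 0 cannot be strictly decreasing).\<close>
definition class_KL :: "(real \<Rightarrow> real \<Rightarrow> real) \<Rightarrow> bool" where
  "class_KL g \<longleftrightarrow> (\<forall>t\<ge>0. class_K (\<lambda>s. g s t)) \<and> (\<forall>s>0. class_L (\<lambda>t. g s t))"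

definition Gamma :: "(nat \<Rightarrow> real) \<Rightarrow> ((real \<Rightarrow> real) \<times> real) set" where
  "Gamma v = {(h, b). strict_mono_on {0..1} h \<and> continuous_on {0..1} h
     \<and> 0 < b \<and> b < 1 \<and> (\<forall>k. v k \<le> h (b ^ k))}"

end

theory Submission
  imports Defs
begin

theorem mainTheorem9:
  fixes Xin :: "'a::euclidean_space set" and T :: "'a \<Rightarrow> 'a" and phi :: "'a \<Rightarrow> real"
    and gamma :: "real \<Rightarrow> real \<Rightarrow> real" and psi :: "'a \<Rightarrow> real"
  assumes Xin_ne: "Xin \<noteq> {}"
    and phi0: "phi 0 = 0"
    and nu_finite: "\<And>k. bdd_above ((\<lambda>x. phi ((T ^^ k) x)) ` Xin)"
    and gamma_KL: "class_KL gamma"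
    and psi_nonneg: "\<And>x. psi x \<ge> 0"
    and psi_bdd: "bdd_above (psi ` Xin)"
    and psi_sup_pos: "(SUP x\<in>Xin. psi x) > 0"
    and bound: "\<And>x k. x \<in> Xin \<Longrightarrow> phi ((T ^^ k) x) \<le> gamma (psi x) (real k)"
  shows "(limsup (\<lambda>n. ereal (nu Xin T phi n)) \<le> 0
          \<and> ((\<exists>k. \<exists>x\<in>Xin. phi ((T ^^ k) x) > 0) \<longrightarrow> G_gt (nu Xin T phi) \<noteq> {}))
       \<and> (\<exists>h. class_Kinf h \<and> (\<forall>k. nu Xin T phi k \<le> h (exp (- real k)))
          \<and> (h, exp (-1)) \<in> Gamma (nu Xin T phi)
          \<and> ((\<exists>k. \<exists>x\<in>Xin. phi ((T ^^ k) x) > 0) \<longrightarrow> {k. nu Xin T phi k > h 0} \<noteq> {}))"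
proof -
  define S where "S = (SUP x\<in>Xin. psi x)"
  have Spos: "S > 0" using psi_sup_pos S_def by simp
  have K: "\<And>t. t \<ge> 0 \<Longrightarrow> class_K (\<lambda>s. gamma s t)" using gamma_KL by (simp add: class_KL_def)
  have L: "class_L (\<lambda>t. gamma S t)" using gamma_KL Spos by (simp add: class_KL_def)
  have Lcont: "continuous_on {0..} (gamma S)"
    and Ldec: "\<And>x y. 0 \<le> x \<Longrightarrow> x < y \<Longrightarrow> gamma S y < gamma S x"
    and Lnn: "\<And>x. x \<ge> 0 \<Longrightarrow> gamma S x \<ge> 0"
    and Llim: "(gamma S \<longlongrightarrow> 0) at_top"
    using L unfolding class_L_def by auto
  have Ldec': "\<And>x y. 0 \<le> x \<Longrightarrow> x \<le> y \<Longrightarrow> gamma S y \<le> gamma S x"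
    by (metis Ldec order.order_iff_strict order_less_imp_le)
  have nu_ge: "\<And>k x. x \<in> Xin \<Longrightarrow> phi ((T ^^ k) x) \<le> nu Xin T phi k"
    unfolding nu_def using nu_finite by (intro cSUP_upper) auto
  have nu_le: "nu Xin T phi k \<le> gamma S (real k)" for k
    unfolding nu_def
  proof (rule cSUP_least[OF Xin_ne])
    fix x assume x: "x \<in> Xin"
    have px: "psi x \<le> S" unfolding S_def using psi_bdd x by (intro cSUP_upper) auto
    have "gamma (psi x) (real k) \<le> gamma S (real k)"
    proof (cases "psi x = S")
      case False
      with px have "psi x < S" by simp
      moreover have "strict_mono_on {0..} (\<lambda>s. gamma s (real k))"
        using K[of "real k"] by (simp add: class_K_def)
      ultimately show ?thesis using psi_nonneg[of x] Spos
        by (simp add: strict_mono_on_def less_imp_le)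
    qed simp
    thus "phi ((T ^^ k) x) \<le> gamma S (real k)" using bound[OF x, of k] by simp
  qed
  have lim0: "(\<lambda>k. gamma S (real k)) \<longlonglongrightarrow> 0"
    using filterlim_compose[OF Llim filterlim_real_sequentially] by simp
  have ls: "limsup (\<lambda>n. ereal (nu Xin T phi n)) \<le> 0"
  proof -
    have "limsup (\<lambda>n. ereal (nu Xin T phi n)) \<le> limsup (\<lambda>n. ereal (gamma S (real n)))"
      by (intro Limsup_mono) (auto simp: nu_le)
    also have "\<dots> = 0"
      using lim_imp_Limsup[OF trivial_limit_sequentially tendsto_ereal[OF lim0]] by (simp add: zero_ereal_def)
    finally show ?thesis .
  qed
  have pos_nu: "nu Xin T phi k > 0" if "x \<in> Xin" "phi ((T ^^ k) x) > 0" for k x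
    using nu_ge[OF that(1), of k] that(2) by simp
  define h where "h t = (if t \<le> 0 then 0 else gamma S (max 0 (- ln t)) + t)" for t
  have h0: "h 0 = 0" by (simp add: h_def)
  have hpos: "t > 0 \<Longrightarrow> h t = gamma S (max 0 (- ln t)) + t" for t by (simp add: h_def)
  have hge: "t \<ge> 0 \<Longrightarrow> h t \<ge> t" for t
    by (cases "t = 0") (auto simp: h_def intro: Lnn)
  have hmono: "strict_mono_on {0..} h"
  proof (rule strict_mono_onI)
    fix s t :: real assume s: "s \<in> {0..}" and t: "t \<in> {0..}" and st: "s < t"
    show "h s < h t"
    proof (cases "s = 0")
      case True
      then show ?thesis using st hpos[of t] Lnn[of "max 0 (- ln t)"] h0 by simp
    next
      case False
      with s have sp: "s > 0" by simp
      have "- ln t \<le> - ln s" using sp st by simp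
      hence "gamma S (max 0 (- ln s)) \<le> gamma S (max 0 (- ln t))"
        by (intro Ldec') auto
      thus ?thesis using hpos[OF sp] hpos[of t] sp st by simp
    qed
  qed
  have hcont_pos: "continuous_on {0<..} h"
  proof -
    have "continuous_on {0<..} (\<lambda>t::real. gamma S (max 0 (- ln t)) + t)"
      apply (intro continuous_on_add continuous_on_id)
      apply (rule continuous_on_compose2[OF Lcont])
        apply (intro continuous_on_max continuous_on_const continuous_on_minus continuous_on_ln continuous_on_id)
      by auto
    thus ?thesis by (rule continuous_on_cong[THEN iffD1, rotated 2]) (auto simp: hpos)
  qed
  have hcont: "continuous_on {0..} h"
    unfolding continuous_on_eq_continuous_within
  proof
    fix x :: real assume x: "x \<in> {0..}"
    show "continuous (at x within {0..}) h"
    proof (cases "x = 0")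
      case False
      with x have "x \<in> {0<..}" by simp
      hence "isCont h x" using hcont_pos
        by (simp add: continuous_on_eq_continuous_at)
      thus ?thesis by (rule continuous_at_imp_continuous_at_within)
    next
      case True
      have "filterlim (\<lambda>t::real. max 0 (- ln t)) at_top (at_right 0)"
      proof -
        have "filterlim (\<lambda>t::real. - ln t) at_top (at_right 0)"
          by (rule filterlim_compose[OF filterlim_uminus_at_top_at_bot ln_at_0])
        thus ?thesis
          by (rule filterlim_at_top_mono) auto
      qed
      hence g: "((\<lambda>t. gamma S (max 0 (- ln t))) \<longlongrightarrow> 0) (at_right 0)"
        by (rule filterlim_compose[OF Llim])
      have that: "((\<lambda>t. gamma S (max 0 (- ln t)) + t) \<longlongrightarrow> 0 + 0) (at_right (0::real))"
        by (intro tendsto_add g tendsto_ident_at)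
      have "(h \<longlongrightarrow> 0) (at_right (0::real))"
      proof -
        have ev: "eventually (\<lambda>t. gamma S (max 0 (- ln t)) + t = h t) (at_right (0::real))"
          by (simp add: eventually_at_filter hpos)
        show ?thesis using Lim_transform_eventually[OF _ ev] that by simp
      qed
      thus ?thesis using True h0
        by (simp add: continuous_within at_within_Ici_at_right)
    qed
  qed
  have hK: "class_Kinf h"
    unfolding class_Kinf_def class_K_def
  proof (intro conjI allI impI hcont hmono h0)
    show "\<And>x. 0 \<le> x \<Longrightarrow> 0 \<le> h x" using hge by force
    show "filterlim h at_top at_top"
      by (rule filterlim_at_top_mono[OF filterlim_ident]) (auto simp: eventually_at_top_linorder intro!: exI[of _ 0] hge)
  qed
  have hbound: "nu Xin T phi k \<le> h (exp (- real k))" for k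
  proof -
    have "h (exp (- real k)) = gamma S (real k) + exp (- real k)"
      by (simp add: hpos)
    thus ?thesis using nu_le[of k] exp_gt_zero[of "- real k"] by linarith
  qed
  have hG: "(h, exp (-1)) \<in> Gamma (nu Xin T phi)"
  proof -
    have a: "strict_mono_on {0..1} h" using hmono by (auto simp: strict_mono_on_def)
    have b: "continuous_on {0..1} h" using hcont by (rule continuous_on_subset) auto
    have c: "\<forall>k. nu Xin T phi k \<le> h (exp (-1) ^ k)"
      using hbound by (simp add: exp_of_nat_mult[symmetric])
    show ?thesis unfolding Gamma_def using a b c by simp
  qed
  show ?thesis
  proof (intro conjI impI exI[of _ h] hK allI hbound hG ls)
    assume "\<exists>k. \<exists>x\<in>Xin. 0 < phi ((T ^^ k) x)"
    then obtain k x where "x \<in> Xin" "phi ((T ^^ k) x) > 0" by blast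
    hence p: "nu Xin T phi k > 0" by (rule pos_nu)
    thus "{k. nu Xin T phi k > h 0} \<noteq> {}" using h0 by auto
    have "ereal (nu Xin T phi k) > limsup (\<lambda>n. ereal (nu Xin T phi n))"
      using ls p by (meson ereal_less(2) order.strict_trans1 zero_ereal_def)
    thus "G_gt (nu Xin T phi) \<noteq> {}" unfolding G_gt_def by blast
  qed
qed

end
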